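(* Let $n\ge 3$, $\mathbf{X}\in\{0,1\}^{n\times n}$, and let $(i_1,j_1)\neq(i_2,j_2)$ be elements of $\{1,\dots,n\}^2$ with $j_1\le j_2$. Put $i_{\min}=\min(i_1,i_2)$ and $i_{\max}=\max(i_1,i_2)$. Then $\mathbf{X}^{i_1,j_1}=\mathbf{X}^{i_2,j_2}$ if and only if all of the following hold: (1) $X_{i,j}=X_{i,j+1}$ for all $i\in[1,i_{\min}-1]\cup[i_{\max}+1,n]$ and all $j\in[j_1,j_2-1]$; (2) $X_{i,j}=X_{i+1,j}$ for all $i\in[i_{\min},i_{\max}-1]$ and all $j\in[1,j_1-1]\cup[j_2+1,n]$; (3) if $i_1\le i_2$: $X_{i,j}=X_{i+1,j+1}$ for all $i\in[i_{\min},i_{\max}-1]$ and $j\in[j_1,j_2-1]$; if $i_1>i_2$: $X_{i,j}=X_{i+1,j-1}$ for all $i\in[i_{\min},i_{\max}-1]$ and $j\in[j_1+1,j_2]$. (No other entries of $\mathbf{X}$ are constrained.)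
   Context: $X_{i,j}$ is the entry of $\mathbf{X}$ in row $i$, column $j$; $[a,b]=\{a,\dots,b\}$ (empty if $a>b$). $\mathbf{X}^{i,j}\in\{0,1\}^{(n-1)\times(n-1)}$ denotes the array obtained from $\mathbf{X}$ by deleting its $i$-th row and $j$-th column. *)

theory Defs
  imports Main
begin

text \<open>An n x n binary array is modelled as a function X :: nat => nat => bool,
  of which only the entries X i j with i, j in {1..n} are relevant
  (True = 1, False = 0).  Indices are 1-based.\<close>

definition del_rc :: "(nat \<Rightarrow> nat \<Rightarrow> 'a) \<Rightarrow> nat \<Rightarrow> nat \<Rightarrow> nat \<Rightarrow> nat \<Rightarrow> 'a" where
  "del_rc X i j a b = X (if a < i then a else Suc a) (if b < j then b else Suc b)"

definition arr_eq :: "nat \<Rightarrow> (nat \<Rightarrow> nat \<Rightarrow> 'a) \<Rightarrow> (nat \<Rightarrow> nat \<Rightarrow> 'a) \<Rightarrow> bool" where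
  "arr_eq m A B \<longleftrightarrow> (\<forall>a\<in>{1..m}. \<forall>b\<in>{1..m}. A a b = B a b)"

end

theory Submission
  imports Defs
begin

theorem lemma3:
  fixes n :: nat and X :: "nat \<Rightarrow> nat \<Rightarrow> bool" and i1 j1 i2 j2 :: nat
  assumes "n \<ge> 3"
    and "i1 \<in> {1..n}" "j1 \<in> {1..n}" "i2 \<in> {1..n}" "j2 \<in> {1..n}"
    and "(i1, j1) \<noteq> (i2, j2)"
    and "j1 \<le> j2"
  shows "arr_eq (n - 1) (del_rc X i1 j1) (del_rc X i2 j2) \<longleftrightarrow>
    ((\<forall>i \<in> {1..min i1 i2 - 1} \<union> {max i1 i2 + 1..n}. \<forall>j \<in> {j1..j2 - 1}.
        X i j = X i (j + 1))
   \<and> (\<forall>i \<in> {min i1 i2..max i1 i2 - 1}. \<forall>j \<in> {1..j1 - 1} \<union> {j2 + 1..n}.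
        X i j = X (i + 1) j)
   \<and> (if i1 \<le> i2 then
        (\<forall>i \<in> {min i1 i2..max i1 i2 - 1}. \<forall>j \<in> {j1..j2 - 1}. X i j = X (i + 1) (j + 1))
      else
        (\<forall>i \<in> {min i1 i2..max i1 i2 - 1}. \<forall>j \<in> {j1 + 1..j2}. X i j = X (i + 1) (j - 1))))"
  (is "?L \<longleftrightarrow> ?C1 \<and> ?C2 \<and> ?C3")
proof
  assume L: ?L
  have H: "X (if a < i1 then a else Suc a) (if b < j1 then b else Suc b)
         = X (if a < i2 then a else Suc a) (if b < j2 then b else Suc b)"
    if "1 \<le> a" "a \<le> n - 1" "1 \<le> b" "b \<le> n - 1" for a b
    using L that unfolding arr_eq_def del_rc_def by simp
  have n: "1 \<le> i1" "i1 \<le> n" "1 \<le> i2" "i2 \<le> n" "1 \<le> j1" "j1 \<le> n" "1 \<le> j2" "j2 \<le> n"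
    using assms by auto
  have C1: ?C1
  proof (intro ballI)
    fix i j assume i: "i \<in> {1..min i1 i2 - 1} \<union> {max i1 i2 + 1..n}" and j: "j \<in> {j1..j2 - 1}"
    have j': "j1 \<le> j" "j < j2" using j n by auto
    show "X i j = X i (j + 1)"
    proof (cases "i < min i1 i2")
      case True
      then have "i < i1" "i < i2" "1 \<le> i" by auto (use i in auto)
      then show ?thesis using H[of i j] j' n by simp
    next
      case False
      then have "i - 1 \<ge> i1" "i - 1 \<ge> i2" "1 \<le> i - 1" "i \<le> n" using i n by auto
      then show ?thesis using H[of "i - 1" j] j' n by simp
    qed
  qed
  have C2: ?C2
  proof (intro ballI)
    fix i j assume i: "i \<in> {min i1 i2..max i1 i2 - 1}" and j: "j \<in> {1..j1 - 1} \<union> {j2 + 1..n}"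
    have i': "min i1 i2 \<le> i" "i < max i1 i2" using i n by auto
    show "X i j = X (i + 1) j"
    proof (cases "j < j1")
      case True
      then have "1 \<le> j" "j < j2" using j n \<open>j1 \<le> j2\<close> by auto
      then show ?thesis using H[of i j] i' n True
        by (cases "i1 \<le> i2") (simp_all add: min_def max_def)
    next
      case False
      then have "j - 1 \<ge> j2" "1 \<le> j - 1" "j \<le> n" using j n by auto
      then show ?thesis using H[of i "j - 1"] i' n \<open>j1 \<le> j2\<close>
        by (cases "i1 \<le> i2") (simp_all add: min_def max_def)
    qed
  qed
  have C3: ?C3
  proof (cases "i1 \<le> i2")
    case True
    have "X i j = X (i + 1) (j + 1)" if i: "i \<in> {min i1 i2..max i1 i2 - 1}" and j: "j \<in> {j1..j2 - 1}" for i j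
    proof -
      have "i1 \<le> i" "i < i2" "j1 \<le> j" "j < j2" using i j True n by auto
      then show ?thesis using H[of i j] n by simp
    qed
    then show ?thesis using True by simp
  next
    case False
    have "X i j = X (i + 1) (j - 1)" if i: "i \<in> {min i1 i2..max i1 i2 - 1}" and j: "j \<in> {j1 + 1..j2}" for i j
    proof -
      have "i2 \<le> i" "i < i1" "j1 \<le> j - 1" "j - 1 < j2" "1 \<le> j - 1" using i j False n by auto
      then show ?thesis using H[of i "j - 1"] n by simp
    qed
    then show ?thesis using False by simp
  qed
  show "?C1 \<and> ?C2 \<and> ?C3" using C1 C2 C3 by blast
next
  assume C: "?C1 \<and> ?C2 \<and> ?C3"
  then have C1: ?C1 and C2: ?C2 and C3: ?C3 by blast+
  have n: "1 \<le> i1" "i1 \<le> n" "1 \<le> i2" "i2 \<le> n" "1 \<le> j1" "j1 \<le> n" "1 \<le> j2" "j2 \<le> n"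
    using assms by auto
  show ?L unfolding arr_eq_def del_rc_def
  proof (intro ballI)
    fix a b assume a: "a \<in> {1..n - 1}" and b: "b \<in> {1..n - 1}"
    have a': "1 \<le> a" "a < n" and b': "1 \<le> b" "b < n" using a b n by auto
    show "X (if a < i1 then a else Suc a) (if b < j1 then b else Suc b)
         = X (if a < i2 then a else Suc a) (if b < j2 then b else Suc b)"
    proof (cases "a < min i1 i2 \<or> max i1 i2 \<le> a")
      case rs: True
      show ?thesis
      proof (cases "b < j1 \<or> j2 \<le> b")
        case True
        then show ?thesis using rs \<open>j1 \<le> j2\<close> by (auto simp: min_def max_def split: if_splits)
      next
        case False
        then have bj: "b \<in> {j1..j2 - 1}" "j1 \<le> b" "b < j2" by auto
        show ?thesis
        proof (cases "a < min i1 i2")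
          case True
          then have "a \<in> {1..min i1 i2 - 1} \<union> {max i1 i2 + 1..n}" "a < i1" "a < i2" using a' by auto
          then show ?thesis using C1 bj by simp
        next
          case F2: False
          then have "a + 1 \<in> {1..min i1 i2 - 1} \<union> {max i1 i2 + 1..n}" "\<not> a < i1" "\<not> a < i2"
            using rs a' by auto
          then show ?thesis using C1 bj by simp
        qed
      qed
    next
      case rd: False
      then have ai: "a \<in> {min i1 i2..max i1 i2 - 1}" by auto
      show ?thesis
      proof (cases "b < j1 \<or> j2 \<le> b")
        case True
        show ?thesis
        proof (cases "b < j1")
          case T: True
          then have "b \<in> {1..j1 - 1} \<union> {j2 + 1..n}" "b < j2" using b' \<open>j1 \<le> j2\<close> by auto
          then have "X a b = X (a + 1) b" using C2 ai by blast
          then show ?thesis using T \<open>b < j2\<close> rd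
            by (cases "i1 \<le> i2") (simp_all add: min_def max_def)
        next
          case F: False
          then have "b + 1 \<in> {1..j1 - 1} \<union> {j2 + 1..n}" "\<not> b < j2" "\<not> b < j1"
            using b' True by auto
          then have "X a (b + 1) = X (a + 1) (b + 1)" using C2 ai by blast
          then show ?thesis using \<open>\<not> b < j2\<close> \<open>\<not> b < j1\<close> rd
            by (cases "i1 \<le> i2") (simp_all add: min_def max_def)
        qed
      next
        case False
        then have bb: "\<not> b < j1" "b < j2" by auto
        show ?thesis
        proof (cases "i1 \<le> i2")
          case True
          then have "b \<in> {j1..j2 - 1}" "\<not> a < i1" "a < i2" using False rd by auto
          then show ?thesis using C3 True ai bb by simp
        next
          case F: False
          then have "b + 1 \<in> {j1 + 1..j2}" "a < i1" "\<not> a < i2" using False rd by auto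
          then have "X a (b + 1) = X (a + 1) b" using C3 F ai by simp
          then show ?thesis using bb \<open>a < i1\<close> \<open>\<not> a < i2\<close> by simp
        qed
      qed
    qed
  qed
qed

end
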